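(* Let $p=p(n)\in[0,1]$ and let $\ell,c$ be positive integers with $q:=\frac{cp}{\ell}\le 1$. Let $k$ be any positive integer and let $\mathcal C$ be any $\ell$-rich collection of edge-colored $k$-uniform hypergraphs on vertex set $[n]$ with colors from $[c]$. Then $$\Pr\left[H\sim \mathcal H^k(n,p)\text{ contains some } C\in\widetilde{\mathcal C}\right]\le \Pr\left[H\sim\mathcal H^k_c(n,q)\text{ contains some }C\in\mathcal C\right].$$
   Context: $\mathcal H^k(n,p)$ is the binomial random $k$-uniform hypergraph on $[n]$: each $k$-subset of $[n]$ is an edge independently with probability $p$. $\mathcal H^k_c(n,q)$ is obtained by taking $H\sim\mathcal H^k(n,q)$ and assigning each edge a color from $[c]$ uniformly and independently at random. A collection $\mathcal C$ of edge-colored $k$-uniform hypergraphs on vertex set $[n]$ with colors in $[c]$ is called $\ell$-rich if for every $C\in\mathcal C$ and every edge $e\in E(C)$ there are at least $\ell$ distinct colors such that recoloring $e$ with that color (keeping all other edges and colors of $C$) yields an element of $\mathcal C$. $\widetilde{\mathcal C}$ denotes the set of uncolored hypergraphs obtained from members of $\mathcal C$ by forgetting the colors. "$H$ contains $C$" for a colored $C$ means $C$ is a subhypergraph of $H$ with the same edge colors. *)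

theory Defs
  imports Complex_Main
begin

definition kedges :: "nat \<Rightarrow> nat \<Rightarrow> nat set set" where
  "kedges n k = {e. e \<subseteq> {1..n} \<and> card e = k}"

definition hypergraphs :: "nat \<Rightarrow> nat \<Rightarrow> nat set set set" where
  "hypergraphs n k = Pow (kedges n k)"

definition colored_hypergraphs :: "nat \<Rightarrow> nat \<Rightarrow> nat \<Rightarrow> (nat set \<times> nat) set set" where
  "colored_hypergraphs n k c =
     {G. G \<subseteq> kedges n k \<times> {1..c} \<and> (\<forall>e a b. (e, a) \<in> G \<longrightarrow> (e, b) \<in> G \<longrightarrow> a = b)}"

definition recolor :: "(nat set \<times> nat) set \<Rightarrow> nat set \<Rightarrow> nat \<Rightarrow> (nat set \<times> nat) set" where
  "recolor C e a = {x \<in> C. fst x \<noteq> e} \<union> {(e, a)}"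

definition rich :: "nat \<Rightarrow> nat \<Rightarrow> (nat set \<times> nat) set set \<Rightarrow> bool" where
  "rich l c \<C> \<longleftrightarrow>
     (\<forall>C\<in>\<C>. \<forall>e\<in>fst ` C. card {a \<in> {1..c}. recolor C e a \<in> \<C>} \<ge> l)"

definition uncolor :: "(nat set \<times> nat) set set \<Rightarrow> nat set set set" where
  "uncolor \<C> = (\<lambda>C. fst ` C) ` \<C>"

definition prob_contains :: "nat \<Rightarrow> nat \<Rightarrow> real \<Rightarrow> nat set set set \<Rightarrow> real" where
  "prob_contains n k p F =
     (\<Sum>H\<in>hypergraphs n k.
        if (\<exists>C\<in>F. C \<subseteq> H)
        then p ^ card H * (1 - p) ^ (card (kedges n k) - card H) else 0)"

definition prob_contains_colored ::
    "nat \<Rightarrow> nat \<Rightarrow> nat \<Rightarrow> real \<Rightarrow> (nat set \<times> nat) set set \<Rightarrow> real" where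
  "prob_contains_colored n k c q F =
     (\<Sum>G\<in>colored_hypergraphs n k c.
        if (\<exists>C\<in>F. C \<subseteq> G)
        then (q / real c) ^ card G * (1 - q) ^ (card (kedges n k) - card G) else 0)"

end

theory Submission imports Defs begin

definition colE :: "nat set set \<Rightarrow> nat \<Rightarrow> (nat set \<times> nat) set set" where
  "colE E c = {G. G \<subseteq> E \<times> {1..c} \<and> (\<forall>e a b. (e, a) \<in> G \<longrightarrow> (e, b) \<in> G \<longrightarrow> a = b)}"

definition UU :: "real \<Rightarrow> nat set set \<Rightarrow> (nat set \<times> nat) set set \<Rightarrow> real" where
  "UU p E X = (\<Sum>H\<in>Pow E. if (\<exists>C\<in>X. fst ` C \<subseteq> H) then p ^ card H * (1 - p) ^ (card E - card H) else 0)"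

definition VV :: "nat \<Rightarrow> real \<Rightarrow> nat set set \<Rightarrow> (nat set \<times> nat) set set \<Rightarrow> real" where
  "VV c q E X = (\<Sum>G\<in>colE E c. if (\<exists>C\<in>X. C \<subseteq> G) then (q / real c) ^ card G * (1 - q) ^ (card E - card G) else 0)"

lemma colE_finite: "finite E \<Longrightarrow> finite (colE E c)"
  by (rule finite_subset[of _ "Pow (E \<times> {1..c})"]) (auto simp: colE_def)

lemma colE_card: assumes "finite E" "G \<in> colE E c" shows "card G \<le> card E"
proof -
  have inj: "inj_on fst G" using assms(2) unfolding colE_def inj_on_def by auto
  have "fst ` G \<subseteq> E" using assms(2) unfolding colE_def by auto
  hence "card (fst ` G) \<le> card E" using assms(1) by (rule card_mono[rotated])
  thus ?thesis using card_image[OF inj] by simp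
qed

lemma UU_insert:
  assumes "finite E" "e \<notin> E"
  shows "UU p (insert e E) X = (1-p) * UU p E {C\<in>X. e \<notin> fst`C} + p * UU p E ((\<lambda>C. {x\<in>C. fst x \<noteq> e}) ` X)"
proof -
  let ?f = "\<lambda>H. if (\<exists>C\<in>X. fst ` C \<subseteq> H) then p ^ card H * (1 - p) ^ (card (insert e E) - card H) else 0"
  have fin: "finite (Pow E)" using assms by simp
  have disj: "Pow E \<inter> insert e ` Pow E = {}" using assms by auto
  have inj: "inj_on (insert e) (Pow E)"
  proof (rule inj_onI)
    fix x y assume x: "x \<in> Pow E" and y: "y \<in> Pow E" and xy: "insert e x = insert e y"
    have "e \<notin> x" "e \<notin> y" using x y assms(2) by auto
    thus "x = y" using xy insert_ident by metis
  qed
  have "UU p (insert e E) X = sum ?f (Pow E) + sum ?f (insert e ` Pow E)"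
    unfolding UU_def Pow_insert by (rule sum.union_disjoint) (use fin disj in auto)
  also have "sum ?f (insert e ` Pow E) = sum (?f \<circ> insert e) (Pow E)"
    by (rule sum.reindex[OF inj])
  also have "sum ?f (Pow E) = (1-p) * UU p E {C\<in>X. e \<notin> fst`C}"
    unfolding UU_def sum_distrib_left
  proof (rule sum.cong[OF refl])
    fix H assume H: "H \<in> Pow E"
    have cH: "card H \<le> card E" using H assms(1) by (simp add: card_mono)
    have ce: "card (insert e E) - card H = Suc (card E - card H)" using assms cH by simp
    have nE: "\<And>C. fst ` C \<subseteq> H \<Longrightarrow> e \<notin> fst ` C" using H assms(2) by auto
    have cond: "(\<exists>C\<in>X. fst ` C \<subseteq> H) = (\<exists>C\<in>{C\<in>X. e \<notin> fst`C}. fst ` C \<subseteq> H)"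
    proof
      assume "\<exists>C\<in>X. fst ` C \<subseteq> H"
      then obtain C where "C \<in> X" "fst ` C \<subseteq> H" by (elim bexE)
      thus "\<exists>C\<in>{C\<in>X. e \<notin> fst`C}. fst ` C \<subseteq> H" using nE by auto
    next
      assume "\<exists>C\<in>{C\<in>X. e \<notin> fst`C}. fst ` C \<subseteq> H"
      thus "\<exists>C\<in>X. fst ` C \<subseteq> H" by auto
    qed
    show "?f H = (1-p) * (if (\<exists>C\<in>{C\<in>X. e \<notin> fst`C}. fst ` C \<subseteq> H) then p ^ card H * (1 - p) ^ (card E - card H) else 0)"
      unfolding cond[symmetric] using ce by simp
  qed
  also have "sum (?f \<circ> insert e) (Pow E) = p * UU p E ((\<lambda>C. {x\<in>C. fst x \<noteq> e}) ` X)"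
    unfolding UU_def sum_distrib_left
  proof (rule sum.cong[OF refl])
    fix H assume H: "H \<in> Pow E"
    have cH: "card H \<le> card E" using H assms(1) by (simp add: card_mono)
    have fH: "finite H" using H assms(1) finite_subset by auto
    have eH: "e \<notin> H" using H assms(2) by auto
    have ci: "card (insert e H) = Suc (card H)" using fH eH by simp
    have ce: "card (insert e E) - card (insert e H) = card E - card H" using assms ci by simp
    have cond: "(\<exists>C\<in>X. fst ` C \<subseteq> insert e H) = (\<exists>C\<in>(\<lambda>C. {x\<in>C. fst x \<noteq> e}) ` X. fst ` C \<subseteq> H)"
      by auto
    show "(?f \<circ> insert e) H = p * (if (\<exists>C\<in>(\<lambda>C. {x\<in>C. fst x \<noteq> e}) ` X. fst ` C \<subseteq> H) then p ^ card H * (1 - p) ^ (card E - card H) else 0)"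
      unfolding cond[symmetric] using ce ci by simp
  qed
  finally show ?thesis .
qed

lemma colE_insert:
  assumes "e \<notin> E"
  shows "colE (insert e E) c = colE E c \<union> (\<lambda>(a,G). insert (e,a) G) ` ({1..c} \<times> colE E c)"
proof (rule set_eqI, rule iffI)
  fix G assume G: "G \<in> colE (insert e E) c"
  have Gs: "G \<subseteq> insert e E \<times> {1..c}" and Gf: "\<And>x a b. (x, a) \<in> G \<Longrightarrow> (x, b) \<in> G \<Longrightarrow> a = b"
    using G unfolding colE_def by blast+
  show "G \<in> colE E c \<union> (\<lambda>(a,G). insert (e,a) G) ` ({1..c} \<times> colE E c)"
  proof (cases "e \<in> fst ` G")
    case False
    have "G \<subseteq> E \<times> {1..c}"
    proof
      fix x assume x: "x \<in> G"
      have "x \<in> insert e E \<times> {1..c}" using x Gs by (rule subsetD[rotated])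
      moreover have "fst x \<noteq> e" using False x by (metis image_eqI)
      ultimately show "x \<in> E \<times> {1..c}" by (cases x) simp
    qed
    hence "G \<in> colE E c" using Gf unfolding colE_def by blast
    thus ?thesis by (rule UnI1)
  next
    case True
    then obtain x where x: "x \<in> G" "e = fst x" by (rule imageE)
    define a where "a = snd x"
    have a: "(e,a) \<in> G" using x unfolding a_def by simp
    have ac: "a \<in> {1..c}" using Gs a by blast
    have G': "G - {(e,a)} \<in> colE E c"
    proof -
      have "G - {(e,a)} \<subseteq> E \<times> {1..c}"
      proof
        fix y assume y: "y \<in> G - {(e,a)}"
        obtain u v where uv: "y = (u,v)" by (cases y)
        have "(u,v) \<in> insert e E \<times> {1..c}" using y uv Gs by blast
        moreover have "u \<noteq> e" using y uv Gf a by blast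
        ultimately show "y \<in> E \<times> {1..c}" using uv by simp
      qed
      thus ?thesis using Gf unfolding colE_def by blast
    qed
    have eq: "G = insert (e,a) (G - {(e,a)})" using a by blast
    have "(a, G - {(e,a)}) \<in> {1..c} \<times> colE E c" using ac G' by (rule SigmaI)
    hence "(\<lambda>(a,G). insert (e,a) G) (a, G - {(e,a)}) \<in> (\<lambda>(a,G). insert (e,a) G) ` ({1..c} \<times> colE E c)"
      by (rule imageI)
    hence "G \<in> (\<lambda>(a,G). insert (e,a) G) ` ({1..c} \<times> colE E c)" using eq by simp
    thus ?thesis by (rule UnI2)
  qed
next
  fix G assume G: "G \<in> colE E c \<union> (\<lambda>(a,G). insert (e,a) G) ` ({1..c} \<times> colE E c)"
  show "G \<in> colE (insert e E) c"
  proof (cases "G \<in> colE E c")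
    case True
    thus ?thesis unfolding colE_def by blast
  next
    case False
    then obtain a G0 where aG: "a \<in> {1..c}" "G0 \<in> colE E c" "G = insert (e,a) G0" using G by blast
    have s: "G0 \<subseteq> E \<times> {1..c}" and f: "\<And>x a b. (x, a) \<in> G0 \<Longrightarrow> (x, b) \<in> G0 \<Longrightarrow> a = b"
      using aG(2) unfolding colE_def by blast+
    have ne: "\<And>b. (e,b) \<notin> G0" using s assms by blast
    have "G \<subseteq> insert e E \<times> {1..c}" using aG(1,3) s by blast
    moreover have "\<forall>x u v. (x, u) \<in> G \<longrightarrow> (x, v) \<in> G \<longrightarrow> u = v"
      using aG(3) f ne by blast
    ultimately show ?thesis unfolding colE_def by blast
  qed
qed

lemma VV_insert:
  assumes "finite E" "e \<notin> E" "\<forall>C\<in>X. C \<in> colE (insert e E) c"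
  shows "VV c q (insert e E) X = (1-q) * VV c q E {C\<in>X. e \<notin> fst`C}
     + (q / real c) * (\<Sum>a\<in>{1..c}. VV c q E ((\<lambda>C. {x\<in>C. fst x \<noteq> e}) ` {C\<in>X. e \<notin> fst`C \<or> (e,a) \<in> C}))"
proof -
  let ?f = "\<lambda>G. if (\<exists>C\<in>X. C \<subseteq> G) then (q / real c) ^ card G * (1 - q) ^ (card (insert e E) - card G) else 0"
  let ?g = "\<lambda>(a,G). insert (e,a) G"
  have fin: "finite (colE E c)" using assms colE_finite by simp
  have disj: "colE E c \<inter> ?g ` ({1..c} \<times> colE E c) = {}" using assms(2) unfolding colE_def by auto
  have inj: "inj_on ?g ({1..c} \<times> colE E c)"
  proof (rule inj_onI)
    fix x y assume x: "x \<in> {1..c} \<times> colE E c" and y: "y \<in> {1..c} \<times> colE E c" and eq: "?g x = ?g y"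
    obtain a G where xa: "x = (a,G)" by force
    obtain b G' where yb: "y = (b,G')" by force
    have nG: "\<forall>z. (e,z) \<notin> G" "\<forall>z. (e,z) \<notin> G'" using x y xa yb assms(2) unfolding colE_def by auto
    have eq': "insert (e,a) G = insert (e,b) G'" using eq xa yb by simp
    hence "(e,a) \<in> insert (e,b) G'" by blast
    hence ab: "a = b" using nG by auto
    have "G = insert (e,a) G - {(e,a)}" using nG by auto
    also have "\<dots> = insert (e,b) G' - {(e,b)}" using eq' ab by simp
    also have "\<dots> = G'" using nG by auto
    finally show "x = y" using xa yb ab by simp
  qed
  have "VV c q (insert e E) X = sum ?f (colE E c) + sum ?f (?g ` ({1..c} \<times> colE E c))"
    unfolding VV_def colE_insert[OF assms(2)] by (rule sum.union_disjoint) (use fin disj in auto)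
  also have "sum ?f (?g ` ({1..c} \<times> colE E c)) = sum (?f \<circ> ?g) ({1..c} \<times> colE E c)"
    by (rule sum.reindex[OF inj])
  also have "\<dots> = (\<Sum>a\<in>{1..c}. \<Sum>G\<in>colE E c. ?f (insert (e,a) G))"
    by (simp add: sum.cartesian_product split_def)
  also have "\<dots> = (\<Sum>a\<in>{1..c}. (q / real c) * VV c q E ((\<lambda>C. {x\<in>C. fst x \<noteq> e}) ` {C\<in>X. e \<notin> fst`C \<or> (e,a) \<in> C}))"
    unfolding VV_def sum_distrib_left
  proof (rule sum.cong[OF refl], rule sum.cong[OF refl])
    fix a G assume a: "a \<in> {1..c}" and G: "G \<in> colE E c"
    have cG: "card G \<le> card E" using colE_card assms(1) G by blast
    have fG: "finite G" using G fin colE_def assms(1) finite_subset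
      by (metis (no_types, lifting) colE_def finite_SigmaI finite_atLeastAtMost mem_Collect_eq)
    have nG: "\<forall>z. (e,z) \<notin> G" using G assms(2) unfolding colE_def by auto
    have ci: "card (insert (e,a) G) = Suc (card G)" using fG nG by simp
    have ce: "card (insert e E) - card (insert (e,a) G) = card E - card G" using assms ci by simp
    have cond: "(\<exists>C\<in>X. C \<subseteq> insert (e,a) G) = (\<exists>C\<in>(\<lambda>C. {x\<in>C. fst x \<noteq> e}) ` {C\<in>X. e \<notin> fst`C \<or> (e,a) \<in> C}. C \<subseteq> G)"
    proof
      assume "\<exists>C\<in>X. C \<subseteq> insert (e,a) G"
      then obtain C where C: "C \<in> X" "C \<subseteq> insert (e,a) G" by blast
      have "e \<notin> fst`C \<or> (e,a) \<in> C" using C nG by force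
      moreover have "{x\<in>C. fst x \<noteq> e} \<subseteq> G" using C by auto
      ultimately show "\<exists>C\<in>(\<lambda>C. {x\<in>C. fst x \<noteq> e}) ` {C\<in>X. e \<notin> fst`C \<or> (e,a) \<in> C}. C \<subseteq> G"
        using C by blast
    next
      assume "\<exists>C\<in>(\<lambda>C. {x\<in>C. fst x \<noteq> e}) ` {C\<in>X. e \<notin> fst`C \<or> (e,a) \<in> C}. C \<subseteq> G"
      then obtain C where C: "C \<in> X" "e \<notin> fst`C \<or> (e,a) \<in> C" "{x\<in>C. fst x \<noteq> e} \<subseteq> G" by blast
      have func: "\<And>z w. (e,z) \<in> C \<Longrightarrow> (e,w) \<in> C \<Longrightarrow> z = w" using assms(3) C(1) unfolding colE_def by blast
      have "C \<subseteq> insert (e,a) G"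
      proof
        fix x assume x: "x \<in> C"
        show "x \<in> insert (e,a) G"
        proof (cases "fst x = e")
          case True
          then obtain z where xz: "x = (e,z)" by (metis prod.collapse)
          hence "(e,a) \<in> C" using C(2) x by force
          hence "z = a" using func x xz by blast
          thus ?thesis using xz by simp
        next
          case False thus ?thesis using x C(3) by blast
        qed
      qed
      thus "\<exists>C\<in>X. C \<subseteq> insert (e,a) G" using C(1) by blast
    qed
    show "?f (insert (e,a) G) = (q / real c) * (if (\<exists>C\<in>(\<lambda>C. {x\<in>C. fst x \<noteq> e}) ` {C\<in>X. e \<notin> fst`C \<or> (e,a) \<in> C}. C \<subseteq> G) then (q / real c) ^ card G * (1 - q) ^ (card E - card G) else 0)"
      unfolding cond[symmetric] using ce ci by simp
  qed
  also have "\<dots> = (q / real c) * (\<Sum>a\<in>{1..c}. VV c q E ((\<lambda>C. {x\<in>C. fst x \<noteq> e}) ` {C\<in>X. e \<notin> fst`C \<or> (e,a) \<in> C}))"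
    by (simp add: sum_distrib_left)
  also have "sum ?f (colE E c) = (1-q) * VV c q E {C\<in>X. e \<notin> fst`C}"
    unfolding VV_def sum_distrib_left
  proof (rule sum.cong[OF refl])
    fix G assume G: "G \<in> colE E c"
    have cG: "card G \<le> card E" using colE_card assms(1) G by blast
    have ce: "card (insert e E) - card G = Suc (card E - card G)" using assms cG by simp
    have "fst ` G \<subseteq> E" using G unfolding colE_def by auto
    hence nE: "\<And>C. C \<subseteq> G \<Longrightarrow> e \<notin> fst ` C" using assms(2) by auto
    have cond: "(\<exists>C\<in>X. C \<subseteq> G) = (\<exists>C\<in>{C\<in>X. e \<notin> fst`C}. C \<subseteq> G)"
    proof
      assume "\<exists>C\<in>X. C \<subseteq> G"
      then obtain C where "C \<in> X" "C \<subseteq> G" by (elim bexE)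
      thus "\<exists>C\<in>{C\<in>X. e \<notin> fst`C}. C \<subseteq> G" using nE by auto
    next
      assume "\<exists>C\<in>{C\<in>X. e \<notin> fst`C}. C \<subseteq> G"
      thus "\<exists>C\<in>X. C \<subseteq> G" by auto
    qed
    show "?f G = (1-q) * (if (\<exists>C\<in>{C\<in>X. e \<notin> fst`C}. C \<subseteq> G) then (q / real c) ^ card G * (1 - q) ^ (card E - card G) else 0)"
      unfolding cond[symmetric] using ce by simp
  qed
  finally show ?thesis .
qed

lemma R_recolor_same: "{x \<in> recolor C e b. fst x \<noteq> e} = {x\<in>C. fst x \<noteq> e}"
  unfolding recolor_def by auto

lemma count_pt:
  fixes w :: real
  assumes rich: "rich l c X" and w: "0 \<le> w"
  shows "(real c - real l) * (if (\<exists>C\<in>{C\<in>X. e \<notin> fst`C}. C \<subseteq> G) then w else 0)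
       + real l * (if (\<exists>C\<in>(\<lambda>C. {x\<in>C. fst x \<noteq> e}) ` X. C \<subseteq> G) then w else 0)
    \<le> (\<Sum>a\<in>{1..c}. if (\<exists>C\<in>(\<lambda>C. {x\<in>C. fst x \<noteq> e}) ` {C\<in>X. e \<notin> fst`C \<or> (e,a) \<in> C}. C \<subseteq> G) then w else 0)"
proof (cases "\<exists>C\<in>{C\<in>X. e \<notin> fst`C}. C \<subseteq> G")
  case True
  then obtain C where C0: "C \<in> {C\<in>X. e \<notin> fst`C}" and CG: "C \<subseteq> G" by (rule bexE)
  have C: "C \<in> X" "e \<notin> fst`C" using C0 by simp_all
  have RC: "{x\<in>C. fst x \<noteq> e} = C"
  proof
    show "{x\<in>C. fst x \<noteq> e} \<subseteq> C" by (rule Collect_restrict)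
    show "C \<subseteq> {x\<in>C. fst x \<noteq> e}"
    proof
      fix x assume "x \<in> C"
      moreover have "fst x \<noteq> e" using C(2) \<open>x \<in> C\<close> by (metis image_eqI)
      ultimately show "x \<in> {x\<in>C. fst x \<noteq> e}" by simp
    qed
  qed
  have all: "\<exists>C\<in>(\<lambda>C. {x\<in>C. fst x \<noteq> e}) ` {C\<in>X. e \<notin> fst`C \<or> (e,a) \<in> C}. C \<subseteq> G" for a
  proof -
    have "C \<in> {C\<in>X. e \<notin> fst`C \<or> (e,a) \<in> C}" using C by simp
    hence m: "{x\<in>C. fst x \<noteq> e} \<in> (\<lambda>C. {x\<in>C. fst x \<noteq> e}) ` {C\<in>X. e \<notin> fst`C \<or> (e,a) \<in> C}" by (rule imageI)
    have "{x\<in>C. fst x \<noteq> e} \<subseteq> G" using CG RC by simp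
    thus ?thesis using m by (rule bexI)
  qed
  have D: "\<exists>C\<in>(\<lambda>C. {x\<in>C. fst x \<noteq> e}) ` X. C \<subseteq> G"
  proof -
    have m: "{x\<in>C. fst x \<noteq> e} \<in> (\<lambda>C. {x\<in>C. fst x \<noteq> e}) ` X" using C(1) by (rule imageI)
    have "{x\<in>C. fst x \<noteq> e} \<subseteq> G" using CG RC by simp
    thus ?thesis using m by (rule bexI)
  qed
  have l: "(real c - real l) * (if (\<exists>C\<in>{C\<in>X. e \<notin> fst`C}. C \<subseteq> G) then w else 0)
       + real l * (if (\<exists>C\<in>(\<lambda>C. {x\<in>C. fst x \<noteq> e}) ` X. C \<subseteq> G) then w else 0) = real c * w"
    by (simp only: if_P[OF True] if_P[OF D]) (simp add: algebra_simps)
  have r: "(\<Sum>a\<in>{1..c}. if (\<exists>C\<in>(\<lambda>C. {x\<in>C. fst x \<noteq> e}) ` {C\<in>X. e \<notin> fst`C \<or> (e,a) \<in> C}. C \<subseteq> G) then w else 0)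
      = (\<Sum>a\<in>{1..c}. w)"
    by (rule sum.cong[OF refl]) (simp only: if_P[OF all])
  show ?thesis unfolding l r by simp
next
  case False
  note nA = False
  show ?thesis
  proof (cases "\<exists>C\<in>(\<lambda>C. {x\<in>C. fst x \<noteq> e}) ` X. C \<subseteq> G")
    case True
    then obtain C' where C'1: "C' \<in> (\<lambda>C. {x\<in>C. fst x \<noteq> e}) ` X" and C'G: "C' \<subseteq> G" by (rule bexE)
    then obtain C where C: "C \<in> X" "C' = {x\<in>C. fst x \<noteq> e}" by (elim imageE) simp
    have eC: "e \<in> fst ` C"
    proof (rule ccontr)
      assume ne: "e \<notin> fst ` C"
      have "C' = C"
      proof
        show "C' \<subseteq> C" unfolding C(2) by (rule Collect_restrict)
        show "C \<subseteq> C'"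
        proof
          fix x assume "x \<in> C"
          moreover have "fst x \<noteq> e" using ne \<open>x \<in> C\<close> by (metis image_eqI)
          ultimately show "x \<in> C'" unfolding C(2) by simp
        qed
      qed
      hence "C \<in> {C\<in>X. e \<notin> fst`C}" "C \<subseteq> G" using C(1) ne C'G by simp_all
      hence "\<exists>C\<in>{C\<in>X. e \<notin> fst`C}. C \<subseteq> G" by (intro bexI)
      thus False using nA by contradiction
    qed
    define S where "S = {b \<in> {1..c}. recolor C e b \<in> X}"
    have cS: "card S \<ge> l" using rich C(1) eC unfolding rich_def S_def by blast
    have Ssub: "S \<subseteq> {1..c}" unfolding S_def by (rule Collect_restrict)
    have inS: "\<exists>C\<in>(\<lambda>C. {x\<in>C. fst x \<noteq> e}) ` {C\<in>X. e \<notin> fst`C \<or> (e,b) \<in> C}. C \<subseteq> G" if b: "b \<in> S" for b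
    proof -
      have "recolor C e b \<in> X" using b unfolding S_def by simp
      moreover have "(e,b) \<in> recolor C e b" unfolding recolor_def by simp
      ultimately have "recolor C e b \<in> {C\<in>X. e \<notin> fst`C \<or> (e,b) \<in> C}" by simp
      hence m: "{x\<in>recolor C e b. fst x \<noteq> e} \<in> (\<lambda>C. {x\<in>C. fst x \<noteq> e}) ` {C\<in>X. e \<notin> fst`C \<or> (e,b) \<in> C}"
        by (rule imageI)
      have "{x\<in>recolor C e b. fst x \<noteq> e} \<subseteq> G" unfolding R_recolor_same using C'G C(2) by simp
      thus ?thesis using m by (rule bexI)
    qed
    have "real l * w \<le> real (card S) * w" using cS w by (simp add: mult_right_mono)
    also have "\<dots> = (\<Sum>b\<in>S. w)" by simp
    also have "\<dots> = (\<Sum>b\<in>S. if (\<exists>C\<in>(\<lambda>C. {x\<in>C. fst x \<noteq> e}) ` {C\<in>X. e \<notin> fst`C \<or> (e,b) \<in> C}. C \<subseteq> G) then w else 0)"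
      by (rule sum.cong[OF refl]) (simp only: if_P[OF inS])
    also have "\<dots> \<le> (\<Sum>b\<in>{1..c}. if (\<exists>C\<in>(\<lambda>C. {x\<in>C. fst x \<noteq> e}) ` {C\<in>X. e \<notin> fst`C \<or> (e,b) \<in> C}. C \<subseteq> G) then w else 0)"
      by (rule sum_mono2) (use Ssub w in auto)
    finally have fin: "real l * w \<le> (\<Sum>b\<in>{1..c}. if (\<exists>C\<in>(\<lambda>C. {x\<in>C. fst x \<noteq> e}) ` {C\<in>X. e \<notin> fst`C \<or> (e,b) \<in> C}. C \<subseteq> G) then w else 0)" .
    have l: "(real c - real l) * (if (\<exists>C\<in>{C\<in>X. e \<notin> fst`C}. C \<subseteq> G) then w else 0)
       + real l * (if (\<exists>C\<in>(\<lambda>C. {x\<in>C. fst x \<noteq> e}) ` X. C \<subseteq> G) then w else 0) = real l * w"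
      by (simp only: if_not_P[OF nA] if_P[OF True] mult_zero_right add_0_left)
    show ?thesis unfolding l using fin .
  next
    case False
    have "0 \<le> (\<Sum>a\<in>{1..c}. if (\<exists>C\<in>(\<lambda>C. {x\<in>C. fst x \<noteq> e}) ` {C\<in>X. e \<notin> fst`C \<or> (e,a) \<in> C}. C \<subseteq> G) then w else 0)"
      by (rule sum_nonneg) (use w in auto)
    moreover have "(real c - real l) * (if (\<exists>C\<in>{C\<in>X. e \<notin> fst`C}. C \<subseteq> G) then w else 0)
       + real l * (if (\<exists>C\<in>(\<lambda>C. {x\<in>C. fst x \<noteq> e}) ` X. C \<subseteq> G) then w else 0) = 0"
      by (simp only: if_not_P[OF nA] if_not_P[OF False] mult_zero_right add_0_left)
    ultimately show ?thesis by simp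
  qed
qed

lemma count:
  assumes rich: "rich l c X" and q: "0 \<le> q" "q \<le> 1"
  shows "(real c - real l) * VV c q E {C\<in>X. e \<notin> fst`C} + real l * VV c q E ((\<lambda>C. {x\<in>C. fst x \<noteq> e}) ` X)
     \<le> (\<Sum>a\<in>{1..c}. VV c q E ((\<lambda>C. {x\<in>C. fst x \<noteq> e}) ` {C\<in>X. e \<notin> fst`C \<or> (e,a) \<in> C}))"
proof -
  let ?w = "\<lambda>G. (q / real c) ^ card G * (1 - q) ^ (card E - card G)"
  have w: "\<And>G. 0 \<le> ?w G" using q by simp
  have "(real c - real l) * VV c q E {C\<in>X. e \<notin> fst`C} + real l * VV c q E ((\<lambda>C. {x\<in>C. fst x \<noteq> e}) ` X)
     = (\<Sum>G\<in>colE E c. (real c - real l) * (if (\<exists>C\<in>{C\<in>X. e \<notin> fst`C}. C \<subseteq> G) then ?w G else 0)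
       + real l * (if (\<exists>C\<in>(\<lambda>C. {x\<in>C. fst x \<noteq> e}) ` X. C \<subseteq> G) then ?w G else 0))"
    unfolding VV_def by (simp add: sum.distrib sum_distrib_left)
  also have "\<dots> \<le> (\<Sum>G\<in>colE E c. \<Sum>a\<in>{1..c}. if (\<exists>C\<in>(\<lambda>C. {x\<in>C. fst x \<noteq> e}) ` {C\<in>X. e \<notin> fst`C \<or> (e,a) \<in> C}. C \<subseteq> G) then ?w G else 0)"
    by (rule sum_mono, rule count_pt[OF rich w])
  also have "\<dots> = (\<Sum>a\<in>{1..c}. VV c q E ((\<lambda>C. {x\<in>C. fst x \<noteq> e}) ` {C\<in>X. e \<notin> fst`C \<or> (e,a) \<in> C}))"
    unfolding VV_def by (rule sum.swap)
  finally show ?thesis .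
qed

lemma rich_sub:
  assumes rich: "rich l c X"
    and h: "\<And>C' f. C' \<in> Y \<Longrightarrow> f \<in> fst ` C' \<Longrightarrow>
        \<exists>C\<in>X. f \<in> fst ` C \<and> (\<forall>b\<in>{1..c}. recolor C f b \<in> X \<longrightarrow> recolor C' f b \<in> Y)"
  shows "rich l c Y"
  unfolding rich_def
proof (intro ballI)
  fix C' f assume C': "C' \<in> Y" and f: "f \<in> fst ` C'"
  obtain C where C: "C \<in> X" "f \<in> fst ` C" "\<forall>b\<in>{1..c}. recolor C f b \<in> X \<longrightarrow> recolor C' f b \<in> Y"
    using h[OF C' f] by blast
  have "l \<le> card {b \<in> {1..c}. recolor C f b \<in> X}" using rich C unfolding rich_def by blast
  also have "\<dots> \<le> card {b \<in> {1..c}. recolor C' f b \<in> Y}"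
    by (rule card_mono) (use C(3) in auto)
  finally show "l \<le> card {b \<in> {1..c}. recolor C' f b \<in> Y}" .
qed

lemma R_recolor: "f \<noteq> e \<Longrightarrow> {x \<in> recolor C f b. fst x \<noteq> e} = recolor {x\<in>C. fst x \<noteq> e} f b"
  unfolding recolor_def by auto

lemma e_recolor: "f \<noteq> e \<Longrightarrow> (e \<in> fst ` recolor C f b) = (e \<in> fst ` C)"
  unfolding recolor_def by force

lemma ea_recolor: "f \<noteq> e \<Longrightarrow> ((e,a) \<in> recolor C f b) = ((e,a) \<in> C)"
  unfolding recolor_def by force

lemma f_R: "f \<in> fst ` {x\<in>C. fst x \<noteq> e} \<Longrightarrow> f \<in> fst ` C \<and> f \<noteq> e"
  by auto

lemma R_id: "e \<notin> fst ` C \<Longrightarrow> {x\<in>C. fst x \<noteq> e} = C"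
proof
  show "{x\<in>C. fst x \<noteq> e} \<subseteq> C" by (rule Collect_restrict)
  assume ne: "e \<notin> fst ` C"
  show "C \<subseteq> {x\<in>C. fst x \<noteq> e}"
  proof
    fix x assume "x \<in> C"
    moreover have "fst x \<noteq> e" using ne \<open>x \<in> C\<close> by (metis image_eqI)
    ultimately show "x \<in> {x\<in>C. fst x \<noteq> e}" by simp
  qed
qed

lemma colE_R:
  assumes "C \<in> colE (insert e E) c"
  shows "{x\<in>C. fst x \<noteq> e} \<in> colE E c"
proof -
  have s: "C \<subseteq> insert e E \<times> {1..c}" and f: "\<And>x a b. (x, a) \<in> C \<Longrightarrow> (x, b) \<in> C \<Longrightarrow> a = b"
    using assms unfolding colE_def by blast+
  have "{x\<in>C. fst x \<noteq> e} \<subseteq> E \<times> {1..c}"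
  proof
    fix y assume y: "y \<in> {x\<in>C. fst x \<noteq> e}"
    obtain u v where uv: "y = (u,v)" by (cases y)
    have "(u,v) \<in> insert e E \<times> {1..c}" using y uv s by blast
    moreover have "u \<noteq> e" using y uv by simp
    ultimately show "y \<in> E \<times> {1..c}" using uv by simp
  qed
  moreover have "\<forall>x a b. (x, a) \<in> {x\<in>C. fst x \<noteq> e} \<longrightarrow> (x, b) \<in> {x\<in>C. fst x \<noteq> e} \<longrightarrow> a = b"
    using f by blast
  ultimately show ?thesis unfolding colE_def by blast
qed

lemma main:
  assumes "finite E" and p: "0 \<le> p" "p \<le> 1" and lc: "0 < l" "0 < c"
    and qdef: "q = real c * p / real l" and q1: "q \<le> 1"
  shows "(\<forall>C\<in>X. C \<in> colE E c) \<Longrightarrow> rich l c X \<Longrightarrow> UU p E X \<le> VV c q E X"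
  using assms(1)
proof (induction E arbitrary: X rule: finite_induct)
  case empty
  have c: "colE {} c = {{}}" unfolding colE_def by auto
  have "(\<exists>C\<in>X. fst ` C \<subseteq> {}) = (\<exists>C\<in>X. C \<subseteq> {})" by simp
  thus ?case unfolding UU_def VV_def c Pow_empty by simp
next
  case (insert e E)
  note wf = insert.prems(1) and rich = insert.prems(2)
  define R where "R = (\<lambda>C::(nat set \<times> nat) set. {x\<in>C. fst x \<noteq> e})"
  define A where "A = {C\<in>X. e \<notin> fst`C}"
  define D where "D = R ` X"
  define Da where "Da = (\<lambda>a. R ` {C\<in>X. e \<notin> fst`C \<or> (e,a) \<in> C})"
  have q0: "0 \<le> q" using qdef p lc by simp
  have wfA: "\<forall>C\<in>A. C \<in> colE E c"
  proof
    fix C assume "C \<in> A"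
    hence C: "C \<in> X" "e \<notin> fst ` C" unfolding A_def by simp_all
    have "{x\<in>C. fst x \<noteq> e} \<in> colE E c" using wf C(1) colE_R by blast
    thus "C \<in> colE E c" unfolding R_id[OF C(2)] .
  qed
  have wfD: "\<forall>C\<in>D. C \<in> colE E c"
  proof
    fix C' assume "C' \<in> D"
    then obtain C where C: "C \<in> X" "C' = R C" unfolding D_def by (rule imageE)
    show "C' \<in> colE E c" unfolding C(2) R_def using wf C(1) colE_R by blast
  qed
  have wfDa: "\<And>a. \<forall>C\<in>Da a. C \<in> colE E c"
  proof
    fix a C' assume "C' \<in> Da a"
    then obtain C where C: "C \<in> {C\<in>X. e \<notin> fst`C \<or> (e,a) \<in> C}" "C' = R C" unfolding Da_def by (rule imageE)
    have "C \<in> X" using C(1) by simp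
    thus "C' \<in> colE E c" unfolding C(2) R_def using wf colE_R by blast
  qed
  have richA: "rich l c A"
  proof (rule rich_sub[OF rich])
    fix C' f assume C': "C' \<in> A" and f: "f \<in> fst ` C'"
    have fe: "f \<noteq> e" using C' f unfolding A_def by auto
    show "\<exists>C\<in>X. f \<in> fst ` C \<and> (\<forall>b\<in>{1..c}. recolor C f b \<in> X \<longrightarrow> recolor C' f b \<in> A)"
      using C' f e_recolor[OF fe] unfolding A_def by auto
  qed
  have richD: "rich l c D"
  proof (rule rich_sub[OF rich])
    fix C' f assume C': "C' \<in> D" and f: "f \<in> fst ` C'"
    from C' obtain C where C: "C \<in> X" "C' = R C" unfolding D_def by (rule imageE)
    have ff: "f \<in> fst ` C" "f \<noteq> e" using f_R f C(2) unfolding R_def by blast+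
    have *: "\<forall>b\<in>{1..c}. recolor C f b \<in> X \<longrightarrow> recolor C' f b \<in> D"
    proof (intro ballI impI)
      fix b assume "recolor C f b \<in> X"
      hence "R (recolor C f b) \<in> D" unfolding D_def by (rule imageI)
      moreover have "R (recolor C f b) = recolor C' f b" unfolding C(2) R_def by (rule R_recolor[OF ff(2)])
      ultimately show "recolor C' f b \<in> D" by simp
    qed
    show "\<exists>C\<in>X. f \<in> fst ` C \<and> (\<forall>b\<in>{1..c}. recolor C f b \<in> X \<longrightarrow> recolor C' f b \<in> D)"
    proof (rule bexI[of _ C])
      show "f \<in> fst ` C \<and> (\<forall>b\<in>{1..c}. recolor C f b \<in> X \<longrightarrow> recolor C' f b \<in> D)" using ff(1) * by (rule conjI)
      show "C \<in> X" by (rule C(1))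
    qed
  qed
  have richDa: "\<And>a. rich l c (Da a)"
  proof (rule rich_sub[OF rich])
    fix a C' f assume C': "C' \<in> Da a" and f: "f \<in> fst ` C'"
    from C' obtain C where C0: "C \<in> {C\<in>X. e \<notin> fst`C \<or> (e,a) \<in> C}" "C' = R C" unfolding Da_def by (rule imageE)
    have C: "C \<in> X" "e \<notin> fst`C \<or> (e,a) \<in> C" "C' = R C" using C0 by simp_all
    have ff: "f \<in> fst ` C" "f \<noteq> e" using f_R f C(3) unfolding R_def by blast+
    have *: "\<forall>b\<in>{1..c}. recolor C f b \<in> X \<longrightarrow> recolor C' f b \<in> Da a"
    proof (intro ballI impI)
      fix b assume X: "recolor C f b \<in> X"
      have "e \<notin> fst`(recolor C f b) \<or> (e,a) \<in> recolor C f b"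
        using C(2) unfolding e_recolor[OF ff(2)] ea_recolor[OF ff(2)] .
      hence "recolor C f b \<in> {C\<in>X. e \<notin> fst`C \<or> (e,a) \<in> C}" using X by simp
      hence "R (recolor C f b) \<in> Da a" unfolding Da_def by (rule imageI)
      moreover have "R (recolor C f b) = recolor C' f b" unfolding C(3) R_def by (rule R_recolor[OF ff(2)])
      ultimately show "recolor C' f b \<in> Da a" by simp
    qed
    show "\<exists>C\<in>X. f \<in> fst ` C \<and> (\<forall>b\<in>{1..c}. recolor C f b \<in> X \<longrightarrow> recolor C' f b \<in> Da a)"
    proof (rule bexI[of _ C])
      show "f \<in> fst ` C \<and> (\<forall>b\<in>{1..c}. recolor C f b \<in> X \<longrightarrow> recolor C' f b \<in> Da a)" using ff(1) * by (rule conjI)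
      show "C \<in> X" by (rule C(1))
    qed
  qed
  have IHA: "UU p E A \<le> VV c q E A" using insert.IH wfA richA by blast
  have IHD: "UU p E D \<le> VV c q E D" using insert.IH wfD richD by blast
  have cnt: "(real c - real l) * VV c q E A + real l * VV c q E D \<le> (\<Sum>a\<in>{1..c}. VV c q E (Da a))"
    using count[OF rich q0 q1, of E e] unfolding A_def D_def Da_def R_def .
  have U: "UU p (insert e E) X = (1-p) * UU p E A + p * UU p E D"
    using UU_insert[OF insert.hyps] unfolding A_def D_def R_def .
  have V: "VV c q (insert e E) X = (1-q) * VV c q E A + (q / real c) * (\<Sum>a\<in>{1..c}. VV c q E (Da a))"
    using VV_insert[OF insert.hyps wf] unfolding A_def Da_def R_def .
  define x where "x = UU p E A"
  define y where "y = UU p E D"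
  define x' where "x' = VV c q E A"
  define y' where "y' = VV c q E D"
  define S where "S = (\<Sum>a\<in>{1..c}. VV c q E (Da a))"
  have qc: "q / real c = p / real l" using qdef lc by simp
  have pl: "0 \<le> p / real l" using p lc by simp
  have "(1-p) * x + p * y \<le> (1-p) * x' + p * y'"
    using IHA IHD p unfolding x_def y_def x'_def y'_def
    by (intro add_mono mult_left_mono) auto
  also have "(1-p) * x' + p * y' = (1-q) * x' + (p / real l) * ((real c - real l) * x' + real l * y')"
    using lc qdef by (simp add: field_simps)
  also have "\<dots> \<le> (1-q) * x' + (p / real l) * S"
    using cnt pl unfolding x'_def y'_def S_def by (intro add_left_mono mult_left_mono) auto
  finally show ?case unfolding U V x_def y_def x'_def y'_def S_def qc .
qed

theorem theorem2:
  fixes n k l c :: nat and p :: real and \<C> :: "(nat set \<times> nat) set set"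
  assumes "0 \<le> p" "p \<le> 1"
    and "0 < l" "0 < c"
    and "real c * p / real l \<le> 1"
    and "0 < k"
    and "\<C> \<subseteq> colored_hypergraphs n k c"
    and "rich l c \<C>"
  shows "prob_contains n k p (uncolor \<C>)
         \<le> prob_contains_colored n k c (real c * p / real l) \<C>"
proof -
  have fin: "finite (kedges n k)"
    by (rule finite_subset[of _ "Pow {1..n}"]) (auto simp: kedges_def)
  have e1: "prob_contains n k p (uncolor \<C>) = UU p (kedges n k) \<C>"
    unfolding prob_contains_def UU_def hypergraphs_def uncolor_def by simp
  have e2: "prob_contains_colored n k c (real c * p / real l) \<C> = VV c (real c * p / real l) (kedges n k) \<C>"
    unfolding prob_contains_colored_def VV_def colored_hypergraphs_def colE_def by simp
  have wf: "\<forall>C\<in>\<C>. C \<in> colE (kedges n k) c"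
    using assms(7) unfolding colored_hypergraphs_def colE_def by blast
  show ?thesis unfolding e1 e2
    by (rule main[OF fin assms(1,2,3,4) refl assms(5) wf assms(8)])
qed

end
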